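(* Let $G=(V,E)$ be a graph with $n$ vertices, $m$ edges and $k(G)$ connected components, such that $h(G)$ is defined. Then for every integer $i$ with $i>n-k(G)-h(G)$, \[[x^i]T_G(x,1)=\binom{m-i-1}{n-k(G)-i}-\sum_{\substack{C\in \mathcal{C}(G),\\ |C|<h(G)}} \binom{m-|C|-i-1}{m-n+k(G)-1}.\]
   Context: $T_G(x,y)$ is the Tutte polynomial of $G$, i.e. $T_G(x,y)=\sum_{A\subseteq E}(x-1)^{r-rk(A)}(y-1)^{|A|-rk(A)}$ with $rk(A)=n-k(A)$, $k(A)$ the number of components of the spanning subgraph $(V,A)$, and $r=n-k(G)$. $[x^i]f(x)$ denotes the coefficient of $x^i$. $\mathcal{C}(G)$ is the set of (edge sets of) cycles of $G$, and $|C|$ is the length of the cycle. $h(G)$ is the minimum number of edges of a subgraph of $G$ of corank $2$ (i.e. an edge set $A$ with $|A|-rk(A)=2$, possibly disconnected) that contains no cut edges (no edge of $A$ is a bridge of $(V,A)$). *)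

theory Defs
  imports "HOL-Computational_Algebra.Polynomial"
begin

text \<open>Finite multigraphs (loops and parallel edges allowed): vertex set V, edge set E,
  and an incidence map inc assigning to each edge its set of one (loop) or two endpoints.\<close>

definition wf_graph :: "'v set \<Rightarrow> 'e set \<Rightarrow> ('e \<Rightarrow> 'v set) \<Rightarrow> bool" where
  "wf_graph V E inc \<longleftrightarrow> finite V \<and> finite E \<and>
     (\<forall>e\<in>E. inc e \<subseteq> V \<and> card (inc e) \<in> {1, 2})"

definition edge_rel :: "('e \<Rightarrow> 'v set) \<Rightarrow> 'e set \<Rightarrow> ('v \<times> 'v) set" where
  "edge_rel inc A = {(u, w). \<exists>e\<in>A. u \<in> inc e \<and> w \<in> inc e}"

definition ncomp :: "'v set \<Rightarrow> ('e \<Rightarrow> 'v set) \<Rightarrow> 'e set \<Rightarrow> nat" where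
  "ncomp V inc A = card ((\<lambda>v. {w\<in>V. (v, w) \<in> (edge_rel inc A)\<^sup>*}) ` V)"

definition rk :: "'v set \<Rightarrow> ('e \<Rightarrow> 'v set) \<Rightarrow> 'e set \<Rightarrow> nat" where
  "rk V inc A = card V - ncomp V inc A"

definition corank :: "'v set \<Rightarrow> ('e \<Rightarrow> 'v set) \<Rightarrow> 'e set \<Rightarrow> nat" where
  "corank V inc A = card A - rk V inc A"

definition is_bridge :: "'v set \<Rightarrow> ('e \<Rightarrow> 'v set) \<Rightarrow> 'e set \<Rightarrow> 'e \<Rightarrow> bool" where
  "is_bridge V inc A e \<longleftrightarrow> e \<in> A \<and> ncomp V inc (A - {e}) > ncomp V inc A"

definition h_set :: "'v set \<Rightarrow> 'e set \<Rightarrow> ('e \<Rightarrow> 'v set) \<Rightarrow> 'e set set" where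
  "h_set V E inc = {A. A \<subseteq> E \<and> corank V inc A = 2 \<and> (\<forall>e\<in>A. \<not> is_bridge V inc A e)}"

definition h_defined :: "'v set \<Rightarrow> 'e set \<Rightarrow> ('e \<Rightarrow> 'v set) \<Rightarrow> bool" where
  "h_defined V E inc \<longleftrightarrow> h_set V E inc \<noteq> {}"

definition hG :: "'v set \<Rightarrow> 'e set \<Rightarrow> ('e \<Rightarrow> 'v set) \<Rightarrow> nat" where
  "hG V E inc = (LEAST c. \<exists>A\<in>h_set V E inc. card A = c)"

definition deg :: "('e \<Rightarrow> 'v set) \<Rightarrow> 'e set \<Rightarrow> 'v \<Rightarrow> nat" where
  "deg inc A v = (\<Sum>e\<in>{e\<in>A. v \<in> inc e}. if card (inc e) = 1 then 2 else 1)"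

definition cycles :: "'v set \<Rightarrow> 'e set \<Rightarrow> ('e \<Rightarrow> 'v set) \<Rightarrow> 'e set set" where
  "cycles V E inc = {C. C \<subseteq> E \<and> C \<noteq> {} \<and>
      (\<forall>v\<in>\<Union>(inc ` C). deg inc C v = 2) \<and>
      (\<forall>u\<in>\<Union>(inc ` C). \<forall>w\<in>\<Union>(inc ` C). (u, w) \<in> (edge_rel inc C)\<^sup>*)}"

text \<open>Tutte polynomial as a polynomial in x with coefficients polynomials in y.\<close>
definition tutte :: "'v set \<Rightarrow> 'e set \<Rightarrow> ('e \<Rightarrow> 'v set) \<Rightarrow> int poly poly" where
  "tutte V E inc = (\<Sum>A\<in>Pow E.
      [:[:-1:], 1:] ^ (rk V inc E - rk V inc A) * [:[:-1, 1:]:] ^ (card A - rk V inc A))"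

definition tutte_x1 :: "'v set \<Rightarrow> 'e set \<Rightarrow> ('e \<Rightarrow> 'v set) \<Rightarrow> int poly" where
  "tutte_x1 V E inc = map_poly (\<lambda>q. poly q 1) (tutte V E inc)"

definition xcoeff :: "int poly \<Rightarrow> int \<Rightarrow> int" where
  "xcoeff p i = (if i < 0 then 0 else coeff p (nat i))"

definition binom :: "int \<Rightarrow> int \<Rightarrow> int" where
  "binom a b = (if 0 \<le> a \<and> 0 \<le> b then int (nat a choose nat b) else 0)"

end

theory Submission imports Defs begin

lemma coeff_lin_pow: "coeff ([:a, 1:]^k) j = (if j \<le> k then of_nat (k choose j) * a^(k-j) else (0::'a::comm_ring_1))"
proof (induction k arbitrary: j)
  case 0 then show ?case by (cases j) auto
next
  case (Suc k)
  have "[:a, 1:]^Suc k = smult a ([:a, 1:]^k) + pCons 0 ([:a, 1:]^k)"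
    by (simp add: power_Suc2 del: power_Suc)
  then have eq: "coeff ([:a, 1:]^Suc k) j = a * coeff ([:a, 1:]^k) j + (case j of 0 \<Rightarrow> 0 | Suc j' \<Rightarrow> coeff ([:a, 1:]^k) j')"
    by (simp add: coeff_pCons split: nat.split)
  show ?case
  proof (cases j)
    case 0 then show ?thesis using eq Suc.IH by simp
  next
    case (Suc j')
    show ?thesis
    proof (cases "j' < k")
      case True
      then have "k - j' = Suc (k - Suc j')" by simp
      then show ?thesis using eq Suc.IH \<open>j = Suc j'\<close> True
        by (simp add: algebra_simps)
    next
      case False
      then show ?thesis using eq Suc.IH \<open>j = Suc j'\<close> by (cases "j' = k") auto
    qed
  qed
qed

lemma const_poly_pow: "[:c:]^n = [:(c::'a::comm_semiring_1)^n:]"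
  by (induction n) (auto simp: one_pCons mult.commute)

lemma sum_pow_card:
  fixes f :: "nat \<Rightarrow> int"
  assumes "finite E"
  shows "(\<Sum>A\<in>Pow E. f (card A)) = (\<Sum>j\<le>card E. int (card E choose j) * f j)"
proof -
  have "(\<Sum>A\<in>Pow E. f (card A)) = (\<Sum>j\<le>card E. \<Sum>A\<in>{A. A \<in> Pow E \<and> card A = j}. f (card A))"
    by (rule sum.group[symmetric]) (use assms in \<open>auto intro: card_mono\<close>)
  also have "\<dots> = (\<Sum>j\<le>card E. int (card E choose j) * f j)"
  proof (rule sum.cong)
    fix j assume "j \<in> {..card E}"
    have S: "{A. A \<in> Pow E \<and> card A = j} = {B. B \<subseteq> E \<and> card B = j}" by auto
    have "(\<Sum>A\<in>{B. B \<subseteq> E \<and> card B = j}. f (card A)) = (\<Sum>A\<in>{B. B \<subseteq> E \<and> card B = j}. f j)"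
      by (rule sum.cong) auto
    also have "\<dots> = int (card {B. B \<subseteq> E \<and> card B = j}) * f j" by simp
    also have "card {B. B \<subseteq> E \<and> card B = j} = card E choose j" using n_subsets[OF assms] .
    finally show "(\<Sum>A\<in>{A. A \<in> Pow E \<and> card A = j}. f (card A)) = int (card E choose j) * f j"
      unfolding S .
  qed simp
  finally show ?thesis .
qed

lemma sum_supersets:
  fixes f :: "nat \<Rightarrow> int"
  assumes "finite E" "C \<subseteq> E"
  shows "(\<Sum>A\<in>{A\<in>Pow E. C \<subseteq> A}. f (card A)) = (\<Sum>l\<le>card E - card C. int (card E - card C choose l) * f (card C + l))"
proof -
  have fC: "finite C" using assms finite_subset by blast
  have img: "{A\<in>Pow E. C \<subseteq> A} = (\<lambda>B. C \<union> B) ` Pow (E - C)" 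
  proof
    show "{A\<in>Pow E. C \<subseteq> A} \<subseteq> (\<lambda>B. C \<union> B) ` Pow (E - C)"
    proof
      fix A assume "A \<in> {A\<in>Pow E. C \<subseteq> A}"
      then have "A = C \<union> (A - C)" "A - C \<in> Pow (E - C)" by auto
      then show "A \<in> (\<lambda>B. C \<union> B) ` Pow (E - C)" by blast
    qed
  qed (use assms in auto)
  have inj: "inj_on (\<lambda>B. C \<union> B) (Pow (E - C))"
  proof (rule inj_onI)
    fix X Y assume "X \<in> Pow (E - C)" "Y \<in> Pow (E - C)" "C \<union> X = C \<union> Y"
    then show "X = Y" by blast
  qed
  have "(\<Sum>A\<in>{A\<in>Pow E. C \<subseteq> A}. f (card A)) = (\<Sum>B\<in>Pow (E - C). f (card (C \<union> B)))"
    unfolding img by (subst sum.reindex[OF inj]) simp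
  also have "\<dots> = (\<Sum>B\<in>Pow (E - C). f (card C + card B))"
  proof (rule sum.cong)
    fix B assume B: "B \<in> Pow (E - C)"
    then have "finite B" using assms(1) finite_subset by auto
    then have "card (C \<union> B) = card C + card B" using B fC by (subst card_Un_disjoint) auto
    then show "f (card (C \<union> B)) = f (card C + card B)" by simp
  qed simp
  also have "\<dots> = (\<Sum>l\<le>card (E - C). int (card (E - C) choose l) * f (card C + l))"
    using sum_pow_card[of "E - C" "\<lambda>j. f (card C + j)"] assms(1) by simp
  also have "card (E - C) = card E - card C" using assms fC by (simp add: card_Diff_subset)
  finally show ?thesis .
qed


definition Gs :: "nat \<Rightarrow> nat \<Rightarrow> nat \<Rightarrow> int" where
  "Gs i M s = (\<Sum>l\<le>s. int (M choose l) * (-1)^(s-l) * int ((i + (s-l)) choose i))"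

lemma Gs_0: "Gs i M 0 = 1" by (simp add: Gs_def)

lemma Gs_Suc: "Gs i M (Suc s) = int (M choose Suc s) - (\<Sum>l\<le>s. int (M choose l) * (-1)^(s-l) * int ((i + Suc (s-l)) choose i))"
proof -
  have "Gs i M (Suc s) = (\<Sum>l\<le>s. int (M choose l) * (-1)^(Suc s-l) * int ((i + (Suc s-l)) choose i)) + int (M choose Suc s)"
    unfolding Gs_def by (simp add: sum.atMost_Suc)
  also have "(\<Sum>l\<le>s. int (M choose l) * (-1)^(Suc s-l) * int ((i + (Suc s-l)) choose i))
     = (\<Sum>l\<le>s. - (int (M choose l) * (-1)^(s-l) * int ((i + Suc (s-l)) choose i)))"
  proof (rule sum.cong)
    fix l assume "l \<in> {..s}"
    then have "Suc s - l = Suc (s - l)" by simp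
    then show "int (M choose l) * (-1)^(Suc s-l) * int ((i + (Suc s-l)) choose i) = - (int (M choose l) * (-1)^(s-l) * int ((i + Suc (s-l)) choose i))"
      by simp
  qed simp
  finally show ?thesis by (simp add: sum_negf)
qed

lemma Gs_zero_rec: "Gs 0 M (Suc s) = int (M choose Suc s) - Gs 0 M s"
  unfolding Gs_Suc by (simp add: Gs_def)

lemma Gs_rec: "Gs (Suc i) M (Suc s) = Gs i M (Suc s) - Gs (Suc i) M s"
proof -
  have split: "int ((Suc i + Suc d) choose Suc i) = int ((i + Suc d) choose i) + int ((Suc i + d) choose Suc i)" for d
  proof -
    have "(Suc i + Suc d) choose Suc i = Suc (i + Suc d) choose Suc i" by simp
    also have "\<dots> = ((i + Suc d) choose i) + ((i + Suc d) choose Suc i)" by (rule binomial_Suc_Suc)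
    also have "i + Suc d = Suc i + d" by simp
    finally show ?thesis by simp
  qed
  have "(\<Sum>l\<le>s. int (M choose l) * (-1)^(s-l) * int ((Suc i + Suc (s-l)) choose Suc i))
     = (\<Sum>l\<le>s. int (M choose l) * (-1)^(s-l) * int ((i + Suc (s-l)) choose i))
       + (\<Sum>l\<le>s. int (M choose l) * (-1)^(s-l) * int ((Suc i + (s-l)) choose Suc i))"
    unfolding split by (simp add: algebra_simps sum.distrib)
  then show ?thesis unfolding Gs_Suc[of "Suc i"] Gs_Suc[of i] by (simp add: Gs_def)
qed

lemma Gs_zero: "0 < M \<Longrightarrow> Gs 0 M s = int ((M - 1) choose s)"
proof (induction s)
  case 0 then show ?case by (simp add: Gs_0)
next
  case (Suc s)
  obtain M' where M: "M = Suc M'" using Suc.prems by (cases M) auto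
  have "Gs 0 M (Suc s) = int (M choose Suc s) - int ((M-1) choose s)"
    using Gs_zero_rec Suc.IH[OF Suc.prems] by simp
  then show ?case using M by simp
qed

lemma Gs_closed: "i < M \<Longrightarrow> Gs i M s = int ((M - i - 1) choose s)"
proof (induction i arbitrary: s)
  case 0 then show ?case using Gs_zero by simp
next
  case (Suc i)
  note outer = Suc.IH
  have lt: "Suc i < M" by fact
  show ?case
  proof (induction s)
    case 0 then show ?case by (simp add: Gs_0)
  next
    case (Suc s)
    have a: "Gs i M (Suc s) = int ((M - i - 1) choose Suc s)" using outer lt by simp
    obtain N where N: "M - i - 1 = Suc N" "M - Suc i - 1 = N" using lt
      by (metis Suc_diff_Suc diff_Suc_eq_diff_pred diff_commute zero_less_diff)
    have "Gs (Suc i) M (Suc s) = int ((M - i - 1) choose Suc s) - int ((M - Suc i - 1) choose s)"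
      using Gs_rec[of i M s] a Suc.IH by simp
    then show ?case unfolding N by simp
  qed
qed


lemma conv_pos:
  fixes M c r ii :: nat
  assumes "r < M + c"
  shows "(\<Sum>l\<le>M. int (M choose l) * (if ii + (c + l) \<le> r then (-1)^(r - (c+l) - ii) * int ((r - (c+l)) choose ii) else 0))
    = (if ii + c \<le> r then int ((M - ii - 1) choose (r - c - ii)) else 0)"
proof (cases "ii + c \<le> r")
  case True
  define s where "s = r - c - ii"
  have sM: "s \<le> M" using assms True unfolding s_def by simp
  have "(\<Sum>l\<le>M. int (M choose l) * (if ii + (c + l) \<le> r then (-1)^(r - (c+l) - ii) * int ((r - (c+l)) choose ii) else 0))
     = (\<Sum>l\<le>s. int (M choose l) * (if ii + (c + l) \<le> r then (-1)^(r - (c+l) - ii) * int ((r - (c+l)) choose ii) else 0))"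
    by (rule sum.mono_neutral_right) (use sM in \<open>auto simp: s_def\<close>)
  also have "\<dots> = Gs ii M s" unfolding Gs_def
  proof (rule sum.cong)
    fix l assume "l \<in> {..s}"
    then have l: "l \<le> s" by simp
    then have "ii + (c + l) \<le> r" "r - (c+l) - ii = s - l" "r - (c+l) = ii + (s - l)" using True unfolding s_def by auto
    then show "int (M choose l) * (if ii + (c + l) \<le> r then (-1)^(r - (c+l) - ii) * int ((r - (c+l)) choose ii) else 0)
      = int (M choose l) * (-1)^(s-l) * int ((ii + (s-l)) choose ii)" by simp
  qed simp
  also have "\<dots> = int ((M - ii - 1) choose s)" using Gs_closed assms True by simp
  finally show ?thesis using True unfolding s_def by simp
next
  case False
  then show ?thesis by (intro trans[OF sum.neutral]) auto
qed

lemma conv_neg: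
  fixes M c r :: nat
  assumes "r + 1 \<le> M + c" "c \<le> r + 1"
  shows "(\<Sum>l\<le>M. int (M choose l) * (if c + l = r + 1 then 1 else 0)) = int (M choose (r + 1 - c))"
proof -
  have "(\<Sum>l\<le>M. int (M choose l) * (if c + l = r + 1 then 1 else 0)) = (\<Sum>l\<le>M. if l = r + 1 - c then int (M choose l) else 0)"
    by (rule sum.cong) (use assms in auto)
  also have "\<dots> = int (M choose (r + 1 - c))" using assms by (subst sum.delta) auto
  finally show ?thesis .
qed


definition wp :: "nat \<Rightarrow> nat \<Rightarrow> nat \<Rightarrow> int" where
  "wp ii r j = (if ii + j \<le> r then (-1)^(r - j - ii) * int ((r - j) choose ii) else 0)"

lemma conv_wp:
  fixes M c r ii :: nat
  assumes "r < M + c"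
  shows "(\<Sum>l\<le>M. int (M choose l) * wp ii r (c + l))
    = (if ii + c \<le> r then int ((M - ii - 1) choose (r - c - ii)) else 0)"
  unfolding wp_def using conv_pos[OF assms] .

lemma conv_wp0:
  fixes M r ii :: nat
  assumes "r < M"
  shows "(\<Sum>l\<le>M. int (M choose l) * wp ii r l)
    = (if ii \<le> r then int ((M - ii - 1) choose (r - ii)) else 0)"
  using conv_wp[of r M 0 ii] assms by simp

lemma term_eval:
  "poly (coeff ([:[:-1:], 1:] ^ a * [:[:-1, 1:]:] ^ b) ii) (1::int)
   = (if b = 0 then (if ii \<le> a then (-1)^(a-ii) * int (a choose ii) else 0) else 0)"
proof -
  have "[:[:-1, 1:]:] ^ b = [:[:-1, 1::int:] ^ b:]" by (rule poly_const_pow)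
  then have "coeff ([:[:-1:], 1:] ^ a * [:[:-1, 1:]:] ^ b) ii = [:-1, 1::int:] ^ b * coeff ([:[:-1:], 1:] ^ a) ii"
    by simp
  moreover have "coeff ([:[:-1::int:], 1:] ^ a) ii = (if ii \<le> a then of_nat (a choose ii) * [:-1:]^(a-ii) else 0)"
    by (rule coeff_lin_pow)
  moreover have "poly ([:-1::int:]^(a-ii)) 1 = (-1)^(a-ii)" by simp
  ultimately show ?thesis by (simp add: poly_const_pow)
qed

lemma card_image_coarser:
  assumes "finite V" "\<forall>u\<in>V. \<forall>w\<in>V. g u = g w \<longrightarrow> f u = f w"
  shows "card (f ` V) \<le> card (g ` V)"
    and "(\<exists>u\<in>V. \<exists>w\<in>V. g u \<noteq> g w \<and> f u = f w) \<Longrightarrow> card (f ` V) < card (g ` V)"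
    and "a \<in> V \<Longrightarrow> \<forall>u\<in>V. \<forall>w\<in>V. f u = f w \<longrightarrow> g u \<noteq> g a \<longrightarrow> g w \<noteq> g a \<longrightarrow> g u = g w
          \<Longrightarrow> card (g ` V) \<le> card (f ` V) + 1"
proof -
  define h where "h X = f (SOME v. v \<in> V \<and> g v = X)" for X
  have hg: "h (g v) = f v" if "v \<in> V" for v
  proof -
    define s where "s = (SOME u. u \<in> V \<and> g u = g v)"
    have "s \<in> V \<and> g s = g v" unfolding s_def
      by (rule someI[of _ v]) (use that in auto)
    then have "f s = f v" using assms(2) that by blast
    then show ?thesis unfolding h_def s_def[symmetric] by simp
  qed
  have fV: "f ` V = h ` (g ` V)" unfolding image_image using hg by (intro image_cong) auto
  show "card (f ` V) \<le> card (g ` V)" unfolding fV by (rule card_image_le) (use assms in auto)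
  show "card (f ` V) < card (g ` V)" if "\<exists>u\<in>V. \<exists>w\<in>V. g u \<noteq> g w \<and> f u = f w"
  proof -
    from that obtain u w where uw: "u \<in> V" "w \<in> V" "g u \<noteq> g w" "f u = f w" by blast
    have "\<not> inj_on h (g ` V)"
    proof
      assume "inj_on h (g ` V)"
      from inj_onD[OF this, of "g u" "g w"] uw hg show False by auto
    qed
    moreover have "card (h ` (g ` V)) \<le> card (g ` V)" by (rule card_image_le) (use assms in auto)
    moreover have "card (h ` (g ` V)) \<noteq> card (g ` V)"
      using eq_card_imp_inj_on[of "g ` V" h] assms(1) calculation(1) by auto
    ultimately show ?thesis unfolding fV by linarith
  qed
  show "card (g ` V) \<le> card (f ` V) + 1"
    if a: "a \<in> V" and inj: "\<forall>u\<in>V. \<forall>w\<in>V. f u = f w \<longrightarrow> g u \<noteq> g a \<longrightarrow> g w \<noteq> g a \<longrightarrow> g u = g w"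
  proof -
    have "inj_on h (g ` V - {g a})"
    proof (rule inj_onI)
      fix X Y assume XY: "X \<in> g ` V - {g a}" "Y \<in> g ` V - {g a}" "h X = h Y"
      then obtain u w where uw: "u \<in> V" "w \<in> V" "X = g u" "Y = g w" by blast
      then have "f u = f w" using XY(3) hg by simp
      then show "X = Y" using inj uw XY(1,2) by blast
    qed
    then have "card (g ` V - {g a}) = card (h ` (g ` V - {g a}))" by (simp add: card_image)
    also have "\<dots> \<le> card (f ` V)" unfolding fV
      by (rule card_mono) (use assms in auto)
    finally have "card (g ` V - {g a}) \<le> card (f ` V)" .
    moreover have "card (g ` V - {g a}) = card (g ` V) - 1"
      using a assms(1) by (simp add: card_Diff_singleton)
    ultimately show ?thesis by linarith
  qed
qed

locale G =
  fixes V :: "'v set" and E :: "'e set" and inc :: "'e \<Rightarrow> 'v set"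
  assumes wf: "wf_graph V E inc"
begin

lemma finV: "finite V" and finE: "finite E" using wf by (auto simp: wf_graph_def)
lemma incV: "e \<in> E \<Longrightarrow> inc e \<subseteq> V" using wf by (auto simp: wf_graph_def)
lemma inc_card: "e \<in> E \<Longrightarrow> card (inc e) = 1 \<or> card (inc e) = 2" using wf by (auto simp: wf_graph_def)
lemma inc_fin: "e \<in> E \<Longrightarrow> finite (inc e)" using inc_card by (metis card.infinite zero_neq_numeral zero_neq_one)
lemma inc_ne: "e \<in> E \<Longrightarrow> inc e \<noteq> {}" using inc_card by fastforce
lemma inc_two: assumes "e \<in> E" obtains a b where "inc e = {a, b}"
proof (cases "card (inc e) = 1")
  case True then show ?thesis using that by (metis card_1_singletonE insert_absorb2)
next
  case False then show ?thesis using that inc_card[OF assms] by (metis card_2_iff)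
qed

abbreviation R where "R A \<equiv> (edge_rel inc A)\<^sup>*"
definition cls where "cls A v = {w\<in>V. (v,w) \<in> R A}"
abbreviation nc where "nc A \<equiv> ncomp V inc A"

lemma nc_def': "nc A = card (cls A ` V)" by (simp add: ncomp_def cls_def)

lemma edge_rel_iff: "(u,w) \<in> edge_rel inc A \<longleftrightarrow> (\<exists>e\<in>A. u \<in> inc e \<and> w \<in> inc e)"
  by (simp add: edge_rel_def)

lemma R_sym: "(u,w) \<in> R A \<Longrightarrow> (w,u) \<in> R A"
proof (induction rule: rtrancl_induct)
  case base then show ?case by simp
next
  case (step y z)
  then have "(z,y) \<in> edge_rel inc A" by (auto simp: edge_rel_iff)
  then show ?case using step by (meson converse_rtrancl_into_rtrancl)
qed

lemma R_trans: "(u,w) \<in> R A \<Longrightarrow> (w,x) \<in> R A \<Longrightarrow> (u,x) \<in> R A" by simp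

lemma R_mono: "A \<subseteq> B \<Longrightarrow> (u,w) \<in> R A \<Longrightarrow> (u,w) \<in> R B"
proof -
  assume "A \<subseteq> B" "(u,w) \<in> R A"
  moreover have "edge_rel inc A \<subseteq> edge_rel inc B" using \<open>A \<subseteq> B\<close> by (auto simp: edge_rel_def)
  ultimately show ?thesis using rtrancl_mono by blast
qed

lemma R_V: assumes "A \<subseteq> E" "(u,w) \<in> R A" "u \<in> V" shows "w \<in> V"
  using assms(2,3)
proof (induction rule: rtrancl_induct)
  case (step y z) then show ?case using assms(1) incV by (auto simp: edge_rel_iff)
qed simp

lemma cls_eq: assumes "A \<subseteq> E" "u \<in> V" "w \<in> V"
  shows "cls A u = cls A w \<longleftrightarrow> (u,w) \<in> R A"
proof
  assume "cls A u = cls A w"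
  then have "w \<in> cls A u" using assms by (auto simp: cls_def)
  then show "(u,w) \<in> R A" by (simp add: cls_def)
next
  assume "(u,w) \<in> R A"
  then show "cls A u = cls A w" unfolding cls_def using R_sym by (auto intro: R_trans)
qed

lemma nc_le: "nc A \<le> card V" unfolding nc_def' using card_image_le finV by blast

definition conn where "conn A e \<longleftrightarrow> (\<forall>a\<in>inc e. \<forall>b\<in>inc e. (a,b) \<in> R A)"

lemma R_insert: "(u,w) \<in> R (insert e A) \<Longrightarrow>
   (u,w) \<in> R A \<or> ((\<exists>a\<in>inc e. (u,a) \<in> R A) \<and> (\<exists>b\<in>inc e. (b,w) \<in> R A))"
proof (induction rule: rtrancl_induct)
  case base then show ?case by simp
next
  case (step x y)
  from step(2) obtain e' where e': "e' \<in> insert e A" "x \<in> inc e'" "y \<in> inc e'" by (auto simp: edge_rel_iff)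
  show ?case
  proof (cases "e' \<in> A")
    case True
    then have "(x,y) \<in> edge_rel inc A" using e' by (auto simp: edge_rel_iff)
    then have xy: "(x,y) \<in> R A" by (rule r_into_rtrancl)
    from step(3) show ?thesis
    proof
      assume "(u,x) \<in> R A" then show ?thesis using xy by (blast intro: rtrancl_trans)
    next
      assume "(\<exists>a\<in>inc e. (u,a) \<in> R A) \<and> (\<exists>b\<in>inc e. (b,x) \<in> R A)"
      then show ?thesis using xy by (meson R_trans)
    qed
  next
    case False
    then have "e' = e" using e' by simp
    then have "\<exists>a\<in>inc e. (u,a) \<in> R A" using step(3) e' by blast
    moreover have "\<exists>b\<in>inc e. (b,y) \<in> R A" using e' \<open>e' = e\<close> by blast
    ultimately show ?thesis by blast
  qed
qed

lemma R_insert_conn: assumes "conn A e" shows "R (insert e A) = R A"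
proof
  show "R A \<subseteq> R (insert e A)" using R_mono[of A "insert e A"] by auto
  show "R (insert e A) \<subseteq> R A"
  proof
    fix p assume "p \<in> R (insert e A)"
    then obtain u w where p: "p = (u,w)" "(u,w) \<in> R (insert e A)" by (cases p) auto
    from R_insert[OF p(2)] show "p \<in> R A" using assms p(1) unfolding conn_def by (meson R_trans)
  qed
qed

lemma nc_insert_conn: "conn A e \<Longrightarrow> nc (insert e A) = nc A"
  by (simp add: ncomp_def R_insert_conn)

lemma cls_coarser: assumes "A \<subseteq> B" "B \<subseteq> E"
  shows "\<forall>u\<in>V. \<forall>w\<in>V. cls A u = cls A w \<longrightarrow> cls B u = cls B w"
proof (intro ballI impI)
  fix u w assume uw: "u \<in> V" "w \<in> V" "cls A u = cls A w"
  have AE: "A \<subseteq> E" using assms by blast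
  have "(u,w) \<in> R A" using cls_eq[OF AE uw(1,2)] uw(3) by blast
  then have "(u,w) \<in> R B" using R_mono assms(1) by blast
  then show "cls B u = cls B w" using cls_eq[OF assms(2) uw(1,2)] by blast
qed

lemma nc_mono_le: assumes "A \<subseteq> B" "B \<subseteq> E" shows "nc B \<le> nc A"
  unfolding nc_def' using card_image_coarser(1)[OF finV cls_coarser[OF assms]] .

lemma nc_insert_nconn: assumes "A \<subseteq> E" "e \<in> E" "\<not> conn A e"
  shows "nc (insert e A) < nc A"
proof -
  from assms(3) obtain a b where ab: "a \<in> inc e" "b \<in> inc e" "(a,b) \<notin> R A" unfolding conn_def by blast
  have "a \<in> V" "b \<in> V" using ab assms incV by auto
  moreover have "(a,b) \<in> R (insert e A)" using ab by (auto simp: edge_rel_iff intro!: r_into_rtrancl)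
  ultimately have "\<exists>u\<in>V. \<exists>w\<in>V. cls A u \<noteq> cls A w \<and> cls (insert e A) u = cls (insert e A) w"
    using ab assms cls_eq by (metis insert_subset)
  then show ?thesis unfolding nc_def'
    using card_image_coarser(2)[OF finV cls_coarser[of A "insert e A"]] assms by auto
qed

lemma nc_insert_ge: assumes "A \<subseteq> E" "e \<in> E" shows "nc A \<le> nc (insert e A) + 1"
proof -
  obtain a b where ab: "inc e = {a,b}" using inc_two assms(2) by blast
  have aV: "a \<in> V" "b \<in> V" using ab incV assms by auto
  have AE: "insert e A \<subseteq> E" using assms by auto
  have "\<forall>u\<in>V. \<forall>w\<in>V. cls (insert e A) u = cls (insert e A) w \<longrightarrow> cls A u \<noteq> cls A a \<longrightarrow> cls A w \<noteq> cls A a \<longrightarrow> cls A u = cls A w"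
  proof (intro ballI impI)
    fix u w assume uw: "u \<in> V" "w \<in> V" "cls (insert e A) u = cls (insert e A) w"
      "cls A u \<noteq> cls A a" "cls A w \<noteq> cls A a"
    have "(u,w) \<in> R (insert e A)" using uw cls_eq AE by blast
    from R_insert[OF this] show "cls A u = cls A w"
    proof
      assume "(u,w) \<in> R A" then show ?thesis using cls_eq assms uw by blast
    next
      assume "(\<exists>a\<in>inc e. (u,a) \<in> R A) \<and> (\<exists>b\<in>inc e. (b,w) \<in> R A)"
      then obtain a' b' where "a' \<in> inc e" "b' \<in> inc e" "(u,a') \<in> R A" "(b',w) \<in> R A" by blast
      moreover have "a' \<in> V" "b' \<in> V" using \<open>a' \<in> inc e\<close> \<open>b' \<in> inc e\<close> ab aV by auto
      ultimately have "cls A u = cls A a'" "cls A w = cls A b'" using cls_eq[OF assms(1)] uw R_sym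
        by blast+
      then show ?thesis using uw ab \<open>a' \<in> inc e\<close> \<open>b' \<in> inc e\<close> by auto
    qed
  qed
  then show ?thesis unfolding nc_def'
    using card_image_coarser(3)[OF finV cls_coarser[of A "insert e A"] aV(1)] AE by auto
qed


lemma R_empty: "(u,w) \<in> R {} \<Longrightarrow> u = w"
  by (simp add: edge_rel_def)

lemma nc_empty: "nc {} = card V"
proof -
  have "cls {} v = {v}" if "v \<in> V" for v using that R_empty by (auto simp: cls_def)
  then have "inj_on (cls {}) V" by (auto intro: inj_onI)
  then show ?thesis unfolding nc_def' by (simp add: card_image)
qed

lemma nc_ge_card: "A \<subseteq> E \<Longrightarrow> card V \<le> nc A + card A"
proof -
  assume "A \<subseteq> E"
  then have "finite A" using finite_subset[OF _ finE] by blast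
  then show ?thesis using \<open>A \<subseteq> E\<close>
  proof (induction A rule: finite_induct)
    case empty then show ?case by (simp add: nc_empty)
  next
    case (insert x F)
    then have "nc F \<le> nc (insert x F) + 1" using nc_insert_ge[of F x] by simp
    then show ?case using insert by simp
  qed
qed

definition nul where "nul A = int (card A) - int (card V) + int (nc A)"

lemma nul_nonneg: "A \<subseteq> E \<Longrightarrow> nul A \<ge> 0"
  using nc_ge_card[of A] unfolding nul_def by linarith

lemma corank_eq: "A \<subseteq> E \<Longrightarrow> int (corank V inc A) = nul A"
  using nc_ge_card[of A] nc_le[of A] unfolding nul_def corank_def rk_def by linarith

lemma rk_eq: "int (rk V inc A) = int (card V) - int (nc A)"
  using nc_le[of A] unfolding rk_def by linarith

lemma nul_empty: "nul {} = 0" by (simp add: nul_def nc_empty)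

lemma finite_sub: "A \<subseteq> E \<Longrightarrow> finite A" using finite_subset[OF _ finE] .

lemma nul_insert: assumes "A \<subseteq> E" "e \<in> E" "e \<notin> A"
  shows "nul A \<le> nul (insert e A)" "nul (insert e A) \<le> nul A + 1"
    "conn A e \<Longrightarrow> nul (insert e A) = nul A + 1"
    "\<not> conn A e \<Longrightarrow> nul (insert e A) = nul A"
proof -
  have c: "card (insert e A) = card A + 1" using assms(3) finite_sub[OF assms(1)] by simp
  have 1: "nc A \<le> nc (insert e A) + 1" using nc_insert_ge[OF assms(1,2)] .
  have iE: "insert e A \<subseteq> E" using assms(1,2) by simp
  have 2: "nc (insert e A) \<le> nc A" using nc_mono_le[OF _ iE, of A] by blast
  show "nul A \<le> nul (insert e A)" "nul (insert e A) \<le> nul A + 1" using 1 2 c unfolding nul_def by linarith+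
  show "nul (insert e A) = nul A + 1" if "conn A e" using nc_insert_conn[OF that] c unfolding nul_def by simp
  show "nul (insert e A) = nul A" if "\<not> conn A e"
  proof -
    have "nc (insert e A) < nc A" using nc_insert_nconn[OF assms(1,2) that] .
    then show ?thesis using 1 c unfolding nul_def by linarith
  qed
qed

lemma nul_remove: assumes "A \<subseteq> E" "e \<in> A"
  shows "nul (A - {e}) \<le> nul A" "nul A \<le> nul (A - {e}) + 1"
    "conn (A - {e}) e \<Longrightarrow> nul A = nul (A - {e}) + 1"
    "\<not> conn (A - {e}) e \<Longrightarrow> nul A = nul (A - {e})"
proof -
  have A: "A = insert e (A - {e})" using assms by blast
  have h: "A - {e} \<subseteq> E" "e \<in> E" "e \<notin> A - {e}" using assms by auto
  show "nul (A - {e}) \<le> nul A" "nul A \<le> nul (A - {e}) + 1"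
    "conn (A - {e}) e \<Longrightarrow> nul A = nul (A - {e}) + 1"
    "\<not> conn (A - {e}) e \<Longrightarrow> nul A = nul (A - {e})"
    using nul_insert[OF h] A by simp_all
qed

lemma nul_mono_aux: "finite D \<Longrightarrow> B \<union> D \<subseteq> E \<Longrightarrow> nul B \<le> nul (B \<union> D)"
proof (induction D rule: finite_induct)
  case empty then show ?case by simp
next
  case (insert x F)
  show ?case
  proof (cases "x \<in> B \<union> F")
    case True
    then have "B \<union> insert x F = B \<union> F" by blast
    then show ?thesis using insert by simp
  next
    case False
    have "nul (B \<union> F) \<le> nul (insert x (B \<union> F))" using nul_insert(1)[of "B \<union> F" x] insert False by blast
    then show ?thesis using insert by simp
  qed
qed

lemma nul_mono: "B \<subseteq> A \<Longrightarrow> A \<subseteq> E \<Longrightarrow> nul B \<le> nul A"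
proof -
  assume a: "B \<subseteq> A" "A \<subseteq> E"
  have "B \<union> (A - B) = A" using a by blast
  moreover have "finite (A - B)" using finite_sub[OF a(2)] by simp
  ultimately show ?thesis using nul_mono_aux[of "A - B" B] a by simp
qed

definition supp where "supp A = \<Union>(inc ` A)"

lemma supp_V: "A \<subseteq> E \<Longrightarrow> supp A \<subseteq> V" using incV by (auto simp: supp_def)
lemma supp_fin: "A \<subseteq> E \<Longrightarrow> finite (supp A)" using finite_subset[OF supp_V finV] .

lemma cls_out: assumes "A \<subseteq> E" "v \<in> V" "v \<notin> supp A" shows "cls A v = {v}"
proof -
  have *: "w = v" if "(v,w) \<in> R A" for w
  proof (rule ccontr)
    assume "w \<noteq> v"
    from that have "\<exists>y. (v,y) \<in> edge_rel inc A"
    proof (cases rule: converse_rtranclE)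
      case base then show ?thesis using \<open>w \<noteq> v\<close> by simp
    next
      case (step y) then show ?thesis by blast
    qed
    then obtain y where "(v,y) \<in> edge_rel inc A" by blast
    then obtain e where "e \<in> A" "v \<in> inc e" unfolding edge_rel_iff by blast
    then show False using assms(3) unfolding supp_def by blast
  qed
  show ?thesis
  proof
    show "cls A v \<subseteq> {v}" using * unfolding cls_def by blast
    show "{v} \<subseteq> cls A v" using assms(2) unfolding cls_def by simp
  qed
qed

lemma nc_supp: assumes "A \<subseteq> E"
  shows "int (nc A) = int (card V) - int (card (supp A)) + int (card (cls A ` supp A))"
proof -
  let ?S = "supp A"
  have SV: "?S \<subseteq> V" using supp_V assms .
  have VS: "V = (V - ?S) \<union> ?S" using SV by auto
  have split: "cls A ` V = cls A ` (V - ?S) \<union> cls A ` ?S" by (subst VS) (rule image_Un)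
  have disj: "cls A ` (V - ?S) \<inter> cls A ` ?S = {}"
  proof (rule ccontr)
    assume "cls A ` (V - ?S) \<inter> cls A ` ?S \<noteq> {}"
    then obtain X where X: "X \<in> cls A ` (V - ?S)" "X \<in> cls A ` ?S" by auto
    from X(1) obtain v where v: "v \<in> V - ?S" "X = cls A v" by auto
    from X(2) obtain u where u: "u \<in> ?S" "X = cls A u" by auto
    have vu: "v \<in> V - ?S" "u \<in> ?S" "cls A v = cls A u" using u v by auto
    have "u \<in> V" using SV vu(2) by auto
    then have "u \<in> cls A u" by (simp add: cls_def)
    moreover have "cls A v = {v}" using cls_out[OF assms] vu(1) by blast
    ultimately have "u = v" using vu(3) by simp
    then show False using vu(1,2) by simp
  qed
  have inj: "inj_on (cls A) (V - ?S)"
  proof (rule inj_onI)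
    fix x y assume "x \<in> V - ?S" "y \<in> V - ?S" "cls A x = cls A y"
    then show "x = y" using cls_out[OF assms, of x] cls_out[OF assms, of y] by simp
  qed
  have fS: "finite ?S" using supp_fin[OF assms] .
  have f1: "finite (cls A ` (V - ?S))" using finV by simp
  have f2: "finite (cls A ` ?S)" using fS by simp
  have c1: "card (cls A ` V) = card (cls A ` (V - ?S)) + card (cls A ` ?S)"
    unfolding split by (rule card_Un_disjoint[OF f1 f2 disj])
  have c2: "card (cls A ` (V - ?S)) = card (V - ?S)" using inj by (rule card_image)
  have c3: "card (V - ?S) = card V - card ?S" using fS SV by (rule card_Diff_subset)
  have c4: "card ?S \<le> card V" using card_mono[OF finV SV] .
  have "nc A = card (cls A ` V)" by (rule nc_def')
  then show ?thesis using c1 c2 c3 c4 by linarith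
qed

definition tw where "tw e = (if card (inc e) = 1 then 2 else (1::nat))"

lemma deg_tw: "deg inc A v = (\<Sum>e\<in>{e\<in>A. v \<in> inc e}. tw e)" by (simp add: deg_def tw_def)

lemma handshake: assumes "A \<subseteq> E" shows "(\<Sum>v\<in>supp A. deg inc A v) = 2 * card A"
proof -
  have "(\<Sum>v\<in>supp A. deg inc A v) = (\<Sum>v\<in>supp A. \<Sum>e\<in>{e\<in>A. v \<in> inc e}. tw e)" by (simp add: deg_tw)
  also have "\<dots> = (\<Sum>e\<in>A. \<Sum>v\<in>{v\<in>supp A. v \<in> inc e}. tw e)"
    by (rule sum.swap_restrict) (use finite_sub[OF assms] supp_fin[OF assms] in auto)
  also have "\<dots> = (\<Sum>e\<in>A. 2)"
  proof (rule sum.cong)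
    fix e assume e: "e \<in> A"
    then have "{v\<in>supp A. v \<in> inc e} = inc e" by (auto simp: supp_def)
    have eE: "e \<in> E" using e assms by blast
    have "card (inc e) * tw e = 2" using inc_card[OF eE] unfolding tw_def by auto
    then show "(\<Sum>v\<in>{v\<in>supp A. v \<in> inc e}. tw e) = 2" unfolding \<open>{v\<in>supp A. v \<in> inc e} = inc e\<close>
      by simp
  qed simp
  finally show ?thesis by simp
qed

lemma tw_pos: "tw e \<ge> 1" by (simp add: tw_def)

lemma cycleD: assumes "C \<in> cycles V E inc"
  shows "C \<subseteq> E" "C \<noteq> {}" "\<And>v. v \<in> supp C \<Longrightarrow> deg inc C v = 2"
    "\<And>u w. u \<in> supp C \<Longrightarrow> w \<in> supp C \<Longrightarrow> (u,w) \<in> R C"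
  using assms by (auto simp: cycles_def supp_def)

lemma supp_ne: "A \<subseteq> E \<Longrightarrow> A \<noteq> {} \<Longrightarrow> supp A \<noteq> {}"
  using inc_ne by (auto simp: supp_def)

lemma cycle_nul: assumes "C \<in> cycles V E inc" shows "nul C = 1"
proof -
  note c = cycleD[OF assms]
  have "(\<Sum>v\<in>supp C. deg inc C v) = (\<Sum>v\<in>supp C. 2)" using c(3) by simp
  then have cardC: "card C = card (supp C)" using handshake[OF c(1)] by simp
  obtain v0 where v0: "v0 \<in> supp C" using supp_ne[OF c(1,2)] by blast
  have SV: "supp C \<subseteq> V" using supp_V[OF c(1)] .
  have "cls C ` supp C = {cls C v0}"
  proof
    show "cls C ` supp C \<subseteq> {cls C v0}"
    proof
      fix X assume "X \<in> cls C ` supp C"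
      then obtain u where u: "u \<in> supp C" "X = cls C u" by blast
      have "(u, v0) \<in> R C" using c(4)[OF u(1) v0] .
      moreover have "u \<in> V" "v0 \<in> V" using u(1) v0 SV by auto
      ultimately have "cls C u = cls C v0" using cls_eq[OF c(1)] by blast
      then show "X \<in> {cls C v0}" using u by simp
    qed
  qed (use v0 in blast)
  then have "card (cls C ` supp C) = 1" by simp
  moreover have "card (supp C) \<le> card V" using card_mono[OF finV SV] .
  ultimately show ?thesis using nc_supp[OF c(1)] cardC unfolding nul_def by linarith
qed

lemma minimal_sub:
  assumes "finite A" "P A"
  obtains B where "B \<subseteq> A" "P B" "\<And>B'. B' \<subset> B \<Longrightarrow> \<not> P B'"
proof -
  have f: "finite {B. B \<subseteq> A \<and> P B}" using assms(1) by simp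
  have ne: "{B. B \<subseteq> A \<and> P B} \<noteq> {}" using assms(2) by auto
  from finite_has_minimal[OF f ne] obtain m where
    m: "m \<in> {B. B \<subseteq> A \<and> P B}" "\<forall>b\<in>{B. B \<subseteq> A \<and> P B}. b \<le> m \<longrightarrow> m = b" by blast
  show ?thesis
  proof (rule that)
    show "m \<subseteq> A" "P m" using m(1) by auto
    fix B' assume B': "B' \<subset> m"
    show "\<not> P B'"
    proof
      assume "P B'"
      then have "B' \<in> {B. B \<subseteq> A \<and> P B}" using B' \<open>m \<subseteq> A\<close> by auto
      then have "m = B'" using m(2) B' by auto
      then show False using B' by simp
    qed
  qed
qed


lemma first_step: assumes "(v,w) \<in> R A" "w \<noteq> v" obtains e where "e \<in> A" "v \<in> inc e"
proof -
  from assms(1) have "\<exists>y. (v,y) \<in> edge_rel inc A"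
  proof (cases rule: converse_rtranclE)
    case base then show ?thesis using assms(2) by simp
  next
    case (step y) then show ?thesis by blast
  qed
  then obtain y where "(v,y) \<in> edge_rel inc A" by blast
  then show ?thesis using that unfolding edge_rel_iff by blast
qed

lemma cycle_exists: assumes AE: "A \<subseteq> E" and nA: "nul A \<ge> 1" shows "\<exists>C\<in>cycles V E inc. C \<subseteq> A"
proof -
  obtain B where B: "B \<subseteq> A" "nul B \<ge> 1" "\<And>B'. B' \<subset> B \<Longrightarrow> \<not> (nul B' \<ge> 1)"
    using minimal_sub[of A "\<lambda>B. nul B \<ge> 1", OF finite_sub[OF AE] nA] by blast
  have BE: "B \<subseteq> E" using B(1) AE by (rule order_trans)
  have Bne: "B \<noteq> {}" using B(2) nul_empty by auto
  have rem0: "nul (B - {e}) = 0" if "e \<in> B" for e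
  proof -
    have "B - {e} \<subset> B" using that by blast
    then have "\<not> nul (B - {e}) \<ge> 1" using B(3) by blast
    moreover have "B - {e} \<subseteq> E" using BE by blast
    then have "nul (B - {e}) \<ge> 0" by (rule nul_nonneg)
    ultimately show ?thesis by linarith
  qed
  have nulB: "nul B = 1"
  proof -
    obtain e where e: "e \<in> B" using Bne by blast
    have "nul B \<le> nul (B - {e}) + 1" using nul_remove(2)[OF BE e] .
    then show ?thesis using rem0[OF e] B(2) by linarith
  qed
  have connB: "conn (B - {e}) e" if e: "e \<in> B" for e
  proof (rule ccontr)
    assume "\<not> conn (B - {e}) e"
    then have "nul B = nul (B - {e})" using nul_remove(4)[OF BE e] by blast
    then show False using nulB rem0[OF e] by simp
  qed
  have deg2: "deg inc B v \<ge> 2" if v: "v \<in> supp B" for v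
  proof -
    from v obtain e where e: "e \<in> B" "v \<in> inc e" unfolding supp_def by blast
    have eE: "e \<in> E" using e(1) BE by blast
    let ?T = "{e\<in>B. v \<in> inc e}"
    have fT: "finite ?T" using finite_sub[OF BE] by simp
    have eT: "e \<in> ?T" using e by simp
    show ?thesis
    proof (cases "card (inc e) = 1")
      case True
      then have "tw e = 2" by (simp add: tw_def)
      moreover have "tw e \<le> (\<Sum>x\<in>?T. tw x)" using member_le_sum[OF eT, of tw] fT by simp
      ultimately show ?thesis unfolding deg_tw by simp
    next
      case False
      then have "card (inc e) = 2" using inc_card[OF eE] by simp
      then obtain x y where xy: "inc e = {x, y}" "x \<noteq> y" unfolding card_2_iff by blast
      obtain w where w: "w \<in> inc e" "w \<noteq> v" using xy e(2) by blast
      have "(v, w) \<in> R (B - {e})" using connB[OF e(1)] w(1) e(2) unfolding conn_def by blast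
      then obtain e' where e': "e' \<in> B - {e}" "v \<in> inc e'" using first_step w(2) by metis
      have sub: "{e, e'} \<subseteq> ?T" using e e' by auto
      have "(\<Sum>x\<in>{e,e'}. tw x) \<le> (\<Sum>x\<in>?T. tw x)" by (rule sum_mono2[OF fT sub]) simp
      moreover have "e \<noteq> e'" using e'(1) by blast
      then have "(\<Sum>x\<in>{e,e'}. tw x) = tw e + tw e'" by simp
      ultimately show ?thesis unfolding deg_tw using tw_pos[of e] tw_pos[of e'] by linarith
    qed
  qed
  let ?S = "supp B"
  have fS: "finite ?S" using supp_fin[OF BE] .
  have SV: "?S \<subseteq> V" using supp_V[OF BE] .
  have Sne: "?S \<noteq> {}" using supp_ne[OF BE Bne] .
  have sumdeg: "(\<Sum>v\<in>?S. deg inc B v) = 2 * card B" using handshake[OF BE] .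
  have "(\<Sum>v\<in>?S. 2) \<le> (\<Sum>v\<in>?S. deg inc B v)" using deg2 by (intro sum_mono) simp
  then have cS: "card ?S \<le> card B" using sumdeg by simp
  let ?q = "card (cls B ` ?S)"
  have q1: "?q \<ge> 1"
  proof -
    have "cls B ` ?S \<noteq> {}" using Sne by simp
    moreover have "finite (cls B ` ?S)" using fS by simp
    ultimately show ?thesis by (simp add: Suc_le_eq card_gt_0_iff)
  qed
  have ncB: "int (nc B) = int (card V) - int (card ?S) + int ?q" using nc_supp[OF BE] .
  have q: "?q = 1" and cB: "card B = card ?S"
    using nulB ncB cS q1 unfolding nul_def by linarith+
  from q obtain X where X: "cls B ` ?S = {X}" using card_1_singletonE by blast
  have conn: "(u,w) \<in> R B" if "u \<in> ?S" "w \<in> ?S" for u w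
  proof -
    have "cls B u = cls B w" using X that by blast
    moreover have "u \<in> V" "w \<in> V" using that SV by auto
    ultimately show ?thesis using cls_eq[OF BE] by blast
  qed
  have deg_eq: "deg inc B v = 2" if v: "v \<in> ?S" for v
  proof (rule ccontr)
    assume "deg inc B v \<noteq> 2"
    then have "2 < deg inc B v" using deg2[OF v] by simp
    then have "(\<Sum>v\<in>?S. 2) < (\<Sum>v\<in>?S. deg inc B v)"
      using v deg2 by (intro sum_strict_mono_ex1[OF fS]) auto
    then show False using sumdeg cB by simp
  qed
  have "B \<in> cycles V E inc"
    unfolding cycles_def using BE Bne deg_eq conn unfolding supp_def by blast
  then show ?thesis using B(1) by blast
qed

lemma supp_mono: "A \<subseteq> B \<Longrightarrow> supp A \<subseteq> supp B" unfolding supp_def by blast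

lemma closure_supp:
  assumes "(v0, w) \<in> R C" "v0 \<in> supp C'"
    and T: "\<And>v. v \<in> supp C' \<Longrightarrow> {e\<in>C. v \<in> inc e} = {e\<in>C'. v \<in> inc e}"
  shows "w \<in> supp C'"
  using assms(1,2)
proof (induction rule: rtrancl_induct)
  case base then show ?case .
next
  case (step x y)
  from step(2) obtain e where e: "e \<in> C" "x \<in> inc e" "y \<in> inc e" unfolding edge_rel_iff by blast
  have "e \<in> {e\<in>C. x \<in> inc e}" using e by simp
  then have "e \<in> C'" using T[OF step(3)[OF step(4)]] by blast
  then show ?case using e(3) unfolding supp_def by blast
qed

lemma cycle_sub_eq: assumes C: "C \<in> cycles V E inc" and C': "C' \<in> cycles V E inc" and sub: "C' \<subseteq> C"
  shows "C' = C"
proof -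
  note c = cycleD[OF C] and c' = cycleD[OF C']
  have Ssub: "supp C' \<subseteq> supp C" using supp_mono[OF sub] .
  have Teq: "{e\<in>C. v \<in> inc e} = {e\<in>C'. v \<in> inc e}" if v: "v \<in> supp C'" for v
  proof (rule ccontr)
    let ?T = "{e\<in>C. v \<in> inc e}" and ?T' = "{e\<in>C'. v \<in> inc e}"
    assume ne: "?T \<noteq> ?T'"
    have subT: "?T' \<subseteq> ?T" using sub by auto
    then obtain e where e: "e \<in> ?T - ?T'" using ne by blast
    have fT: "finite ?T" using finite_sub[OF c(1)] by simp
    have "(\<Sum>x\<in>?T. tw x) = (\<Sum>x\<in>?T - ?T'. tw x) + (\<Sum>x\<in>?T'. tw x)" by (rule sum.subset_diff[OF subT fT])
    moreover have "tw e \<le> (\<Sum>x\<in>?T - ?T'. tw x)" using member_le_sum[OF e, of tw] fT by simp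
    moreover have "v \<in> supp C" using v Ssub by blast
    then have "deg inc C v = 2" by (rule c(3))
    moreover have "deg inc C' v = 2" using v by (rule c'(3))
    ultimately show False unfolding deg_tw using tw_pos[of e] by linarith
  qed
  obtain v0 where v0: "v0 \<in> supp C'" using supp_ne[OF c'(1,2)] by blast
  have inS': "w \<in> supp C'" if w: "w \<in> supp C" for w
  proof -
    have "v0 \<in> supp C" using v0 Ssub by blast
    then have "(v0, w) \<in> R C" using c(4) w by blast
    then show ?thesis by (rule closure_supp[OF _ v0 Teq])
  qed
  show "C' = C"
  proof
    show "C' \<subseteq> C" using sub .
    show "C \<subseteq> C'"
    proof
      fix e assume e: "e \<in> C"
      have eE: "e \<in> E" using e c(1) by blast
      obtain v where v: "v \<in> inc e" using inc_ne[OF eE] by blast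
      then have "v \<in> supp C" using e unfolding supp_def by blast
      then have "v \<in> supp C'" by (rule inS')
      moreover have "e \<in> {e\<in>C. v \<in> inc e}" using e v by simp
      ultimately have "e \<in> {e\<in>C'. v \<in> inc e}" using Teq by simp
      then show "e \<in> C'" by simp
    qed
  qed
qed

lemma cycle_proper: assumes C: "C \<in> cycles V E inc" and B: "B \<subset> C" shows "nul B = 0"
proof -
  have BE: "B \<subseteq> E" using B cycleD(1)[OF C] by blast
  have "\<not> nul B \<ge> 1"
  proof
    assume "nul B \<ge> 1"
    then obtain C'' where C'': "C'' \<in> cycles V E inc" "C'' \<subseteq> B" using cycle_exists[OF BE] by blast
    have "C'' \<subseteq> C" using C''(2) B by blast
    then have "C'' = C" using cycle_sub_eq[OF C C''(1)] by simp
    then show False using C'' B by blast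
  qed
  then show ?thesis using nul_nonneg[OF BE] by linarith
qed

lemma cycle_unique: assumes AE: "A \<subseteq> E" and nA: "nul A \<le> 1"
  and C1: "C1 \<in> cycles V E inc" "C1 \<subseteq> A" and C2: "C2 \<in> cycles V E inc" "C2 \<subseteq> A"
  shows "C1 = C2"
proof (rule ccontr)
  assume neq: "C1 \<noteq> C2"
  have "\<not> C1 \<subseteq> C2" using cycle_sub_eq[OF C2(1) C1(1)] neq by blast
  then obtain e where e: "e \<in> C1" "e \<notin> C2" by blast
  have C1E: "C1 \<subseteq> E" using cycleD(1)[OF C1(1)] .
  have "C1 - {e} \<subset> C1" using e(1) by blast
  then have n0: "nul (C1 - {e}) = 0" using cycle_proper[OF C1(1)] by blast
  have cn: "conn (C1 - {e}) e"
  proof (rule ccontr)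
    assume "\<not> conn (C1 - {e}) e"
    then have "nul C1 = nul (C1 - {e})" using nul_remove(4)[OF C1E e(1)] by blast
    then show False using n0 cycle_nul[OF C1(1)] by simp
  qed
  have "C1 - {e} \<subseteq> A - {e}" using C1(2) by blast
  then have "conn (A - {e}) e" using cn R_mono[of "C1 - {e}" "A - {e}"] unfolding conn_def by simp
  moreover have eA: "e \<in> A" using e(1) C1(2) by blast
  ultimately have nA': "nul A = nul (A - {e}) + 1" using nul_remove(3)[OF AE eA] by simp
  have "C2 \<subseteq> A - {e}" using C2(2) e(2) by blast
  moreover have "A - {e} \<subseteq> E" using AE by blast
  ultimately have "nul C2 \<le> nul (A - {e})" by (rule nul_mono)
  then show False using nA nA' cycle_nul[OF C2(1)] by linarith
qed

lemma small_nul: assumes AE: "A \<subseteq> E" and cA: "card A < hG V E inc" shows "nul A \<le> 1"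
proof (rule ccontr)
  assume "\<not> nul A \<le> 1"
  then have nA: "nul A \<ge> 2" by simp
  obtain B where B: "B \<subseteq> A" "nul B \<ge> 2" "\<And>B'. B' \<subset> B \<Longrightarrow> \<not> (nul B' \<ge> 2)"
    using minimal_sub[of A "\<lambda>B. nul B \<ge> 2", OF finite_sub[OF AE] nA] by blast
  have BE: "B \<subseteq> E" using B(1) AE by (rule order_trans)
  have Bne: "B \<noteq> {}" using B(2) nul_empty by auto
  have rem: "nul (B - {e}) \<le> 1" if "e \<in> B" for e
  proof -
    have "B - {e} \<subset> B" using that by blast
    then have "\<not> nul (B - {e}) \<ge> 2" by (rule B(3))
    then show ?thesis by simp
  qed
  have nulB: "nul B = 2"
  proof -
    obtain e where e: "e \<in> B" using Bne by blast
    have "nul B \<le> nul (B - {e}) + 1" using nul_remove(2)[OF BE e] .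
    then show ?thesis using rem[OF e] B(2) by linarith
  qed
  have nob: "\<not> is_bridge V inc B e" if e: "e \<in> B" for e
  proof
    assume "is_bridge V inc B e"
    then have gt: "nc (B - {e}) > nc B" unfolding is_bridge_def by blast
    have ins: "insert e (B - {e}) = B" using e by blast
    have "B - {e} \<subseteq> E" "e \<in> E" using BE e by auto
    then have "nc (B - {e}) \<le> nc (insert e (B - {e})) + 1" by (rule nc_insert_ge)
    then have "nc (B - {e}) = nc B + 1" using gt ins by simp
    moreover have "card (B - {e}) = card B - 1" using e by simp
    moreover have "card B \<ge> 1" using e finite_sub[OF BE] card_gt_0_iff[of B] by auto
    ultimately have "nul (B - {e}) = nul B" unfolding nul_def by simp
    then show False using rem[OF e] nulB by simp
  qed
  have "int (corank V inc B) = 2" using corank_eq[OF BE] nulB by simp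
  then have "corank V inc B = 2" by simp
  then have "B \<in> h_set V E inc" unfolding h_set_def using BE nob by blast
  then have "hG V E inc \<le> card B" unfolding hG_def by (intro Least_le) blast
  moreover have "card B \<le> card A" using card_mono[OF finite_sub[OF AE] B(1)] .
  ultimately show False using cA by simp
qed


lemma cyc_count: assumes AE: "A \<subseteq> E" and cA: "card A < hG V E inc"
  shows "card {C\<in>cycles V E inc. C \<subseteq> A} = (if nul A = 1 then 1 else 0)" "nul A = 0 \<or> nul A = 1"
proof -
  show n01: "nul A = 0 \<or> nul A = 1" using small_nul[OF AE cA] nul_nonneg[OF AE] by linarith
  show "card {C\<in>cycles V E inc. C \<subseteq> A} = (if nul A = 1 then 1 else 0)"
  proof (cases "nul A = 1")
    case True
    then obtain C0 where C0: "C0 \<in> cycles V E inc" "C0 \<subseteq> A" using cycle_exists[OF AE] by auto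
    have "{C\<in>cycles V E inc. C \<subseteq> A} = {C0}"
    proof
      show "{C0} \<subseteq> {C\<in>cycles V E inc. C \<subseteq> A}" using C0 by simp
      show "{C\<in>cycles V E inc. C \<subseteq> A} \<subseteq> {C0}"
      proof
        fix C assume "C \<in> {C\<in>cycles V E inc. C \<subseteq> A}"
        then have C: "C \<in> cycles V E inc" "C \<subseteq> A" by auto
        have "nul A \<le> 1" using True by simp
        then have "C = C0" using cycle_unique[OF AE _ C(1) C(2) C0(1) C0(2)] by simp
        then show "C \<in> {C0}" by simp
      qed
    qed
    then show ?thesis using True by simp
  next
    case False
    have E0: "{C\<in>cycles V E inc. C \<subseteq> A} = {}"
    proof (rule ccontr)
      assume "{C\<in>cycles V E inc. C \<subseteq> A} \<noteq> {}"
      then obtain C where C: "C \<in> cycles V E inc" "C \<subseteq> A" by blast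
      have "nul C \<le> nul A" using nul_mono[OF C(2) AE] .
      then show False using cycle_nul[OF C(1)] False n01 by simp
    qed
    show ?thesis unfolding E0 using False by simp
  qed
qed

lemma main_sum:
  fixes w :: "nat \<Rightarrow> int"
  assumes wz: "\<And>j. j \<ge> hG V E inc \<Longrightarrow> w j = 0"
  shows "(\<Sum>A\<in>Pow E. (if nul A = 0 then w (card A) else 0)) =
     (\<Sum>A\<in>Pow E. w (card A)) - (\<Sum>C\<in>{C\<in>cycles V E inc. card C < hG V E inc}. \<Sum>A\<in>{A\<in>Pow E. C \<subseteq> A}. w (card A))"
proof -
  let ?h = "hG V E inc"
  let ?Cy = "{C\<in>cycles V E inc. card C < ?h}"
  have pt: "(if nul A = 0 then w (card A) else 0) = w (card A) - w (card A) * int (card {C\<in>?Cy. C \<subseteq> A})"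
    if A: "A \<in> Pow E" for A
  proof (cases "card A < ?h")
    case True
    have AE: "A \<subseteq> E" using A by simp
    have lt: "card C < ?h" if "C \<subseteq> A" for C using card_mono[OF finite_sub[OF AE] that] True by simp
    have eq: "{C\<in>?Cy. C \<subseteq> A} = {C\<in>cycles V E inc. C \<subseteq> A}" using lt by auto
    have "card {C\<in>cycles V E inc. C \<subseteq> A} = (if nul A = 1 then 1 else 0)" "nul A = 0 \<or> nul A = 1"
      using cyc_count[OF AE True] by auto
    then show ?thesis unfolding eq by auto
  next
    case False then show ?thesis using wz by simp
  qed
  have fP: "finite (Pow E)" using finE by simp
  have sub: "?Cy \<subseteq> Pow E" using cycleD(1) by auto
  have fCy: "finite ?Cy" using finite_subset[OF sub fP] .
  have s1: "(\<Sum>A\<in>Pow E. (if nul A = 0 then w (card A) else 0)) = (\<Sum>A\<in>Pow E. w (card A)) - (\<Sum>A\<in>Pow E. w (card A) * int (card {C\<in>?Cy. C \<subseteq> A}))"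
    using pt by (simp add: sum_subtractf)
  have s2: "(\<Sum>A\<in>Pow E. w (card A) * int (card {C\<in>?Cy. C \<subseteq> A})) = (\<Sum>A\<in>Pow E. \<Sum>C\<in>{C. C \<in> ?Cy \<and> C \<subseteq> A}. w (card A))"
    by (rule sum.cong) (simp_all add: mult.commute)
  have s3: "(\<Sum>A\<in>Pow E. \<Sum>C\<in>{C. C \<in> ?Cy \<and> C \<subseteq> A}. w (card A)) = (\<Sum>C\<in>?Cy. \<Sum>A\<in>{A. A \<in> Pow E \<and> C \<subseteq> A}. w (card A))"
    by (rule sum.swap_restrict[OF fP fCy])
  show ?thesis using s1 s2 s3 by simp
qed

lemma tutte_coeff: "coeff (tutte_x1 V E inc) ii = (\<Sum>A\<in>Pow E. if nul A = 0 then wp ii (rk V inc E) (card A) else 0)"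
proof -
  have "coeff (tutte_x1 V E inc) ii = (\<Sum>A\<in>Pow E. poly (coeff ([:[:-1:], 1:] ^ (rk V inc E - rk V inc A) * [:[:-1, 1:]:] ^ (card A - rk V inc A)) ii) 1)"
    unfolding tutte_x1_def tutte_def by (simp add: coeff_map_poly coeff_sum poly_sum)
  also have "\<dots> = (\<Sum>A\<in>Pow E. if nul A = 0 then wp ii (rk V inc E) (card A) else 0)"
  proof (rule sum.cong)
    fix A assume "A \<in> Pow E"
    then have AE: "A \<subseteq> E" by simp
    have cr: "int (card A - rk V inc A) = nul A" using corank_eq[OF AE] unfolding corank_def .
    show "poly (coeff ([:[:-1:], 1:] ^ (rk V inc E - rk V inc A) * [:[:-1, 1:]:] ^ (card A - rk V inc A)) ii) 1
       = (if nul A = 0 then wp ii (rk V inc E) (card A) else 0)"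
    proof (cases "nul A = 0")
      case True
      have "int (rk V inc A) = int (card A)" using rk_eq[of A] True unfolding nul_def by simp
      then have rkA: "rk V inc A = card A" by simp
      have "nc E \<le> nc A" using nc_mono_le[OF AE] by simp
      then have "rk V inc A \<le> rk V inc E" unfolding rk_def by simp
      then have le: "card A \<le> rk V inc E" using rkA by simp
      show ?thesis unfolding term_eval rkA using True le by (auto simp: wp_def)
    next
      case False
      then have "card A - rk V inc A \<noteq> 0" using cr by auto
      then show ?thesis unfolding term_eval using False by simp
    qed
  qed simp
  finally show ?thesis .
qed


lemma binom_nat: "binom (int a) (int b) = int (a choose b)" by (simp add: binom_def)

lemma final:
  assumes hd: "h_defined V E inc"
    and hi: "i > int (card V) - int (ncomp V inc E) - int (hG V E inc)"
  shows "xcoeff (tutte_x1 V E inc) i =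
    binom (int (card E) - i - 1) (int (card V) - int (ncomp V inc E) - i)
    - (\<Sum>C\<in>{C\<in>cycles V E inc. card C < hG V E inc}.
         binom (int (card E) - int (card C) - i - 1)
               (int (card E) - int (card V) + int (ncomp V inc E) - 1))"
proof -
  define h where "h = hG V E inc"
  define m where "m = card E"
  define r where "r = rk V inc E"
  have r_int: "int r = int (card V) - int (nc E)" unfolding r_def by (rule rk_eq)
  let ?Cy = "{C\<in>cycles V E inc. card C < h}"
  obtain A0 where A0: "A0 \<in> h_set V E inc" using hd unfolding h_defined_def by blast
  have A0E: "A0 \<subseteq> E" and cA0: "corank V inc A0 = 2" using A0 unfolding h_set_def by auto
  have "nul A0 = 2" using corank_eq[OF A0E] cA0 by simp
  moreover have "nul A0 \<le> nul E" using nul_mono[OF A0E subset_refl] .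
  ultimately have "nul E \<ge> 2" by simp
  then have mr: "r + 2 \<le> m" using r_int unfolding nul_def m_def by linarith
  have hr: "h \<le> r + 2"
  proof -
    obtain A where A: "A \<subseteq> E" "card A = r + 2" using mr obtain_subset_with_card_n unfolding m_def by metis
    have "nc E \<le> nc A" using nc_mono_le[OF A(1)] by simp
    then have "nul A \<ge> 2" using A r_int unfolding nul_def by linarith
    then have "\<not> card A < h" using small_nul[OF A(1)] unfolding h_def by fastforce
    then show ?thesis using A(2) by simp
  qed
  have cyc_sub: "C \<subseteq> E" if "C \<in> ?Cy" for C using cycleD(1) that by auto
  have cyc_le: "card C \<le> m" if "C \<in> ?Cy" for C using card_mono[OF finE cyc_sub[OF that]] unfolding m_def .
  have cyc_lt: "card C < h" if "C \<in> ?Cy" for C using that by simp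
  show ?thesis
  proof (cases "i \<ge> 0")
    case True
    define ii where "ii = nat i"
    have i_eq: "i = int ii" using True unfolding ii_def by simp
    define w where "w = wp ii r"
    have wz: "w j = 0" if "j \<ge> hG V E inc" for j
    proof -
      have "int ii + int j > int r" using hi that r_int i_eq unfolding h_def by linarith
      then show ?thesis unfolding w_def wp_def by simp
    qed
    have lhs: "xcoeff (tutte_x1 V E inc) i = (\<Sum>A\<in>Pow E. w (card A)) - (\<Sum>C\<in>?Cy. \<Sum>A\<in>{A\<in>Pow E. C \<subseteq> A}. w (card A))"
    proof -
      have "xcoeff (tutte_x1 V E inc) i = coeff (tutte_x1 V E inc) ii" unfolding xcoeff_def ii_def using True by simp
      also have "\<dots> = (\<Sum>A\<in>Pow E. if nul A = 0 then w (card A) else 0)" unfolding tutte_coeff w_def r_def ..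
      also have "\<dots> = (\<Sum>A\<in>Pow E. w (card A)) - (\<Sum>C\<in>?Cy. \<Sum>A\<in>{A\<in>Pow E. C \<subseteq> A}. w (card A))"
        unfolding h_def by (rule main_sum[of w, OF wz])
      finally show ?thesis .
    qed
    have t1: "(\<Sum>A\<in>Pow E. w (card A)) = binom (int (card E) - i - 1) (int (card V) - int (nc E) - i)"
    proof -
      have "(\<Sum>A\<in>Pow E. w (card A)) = (\<Sum>j\<le>m. int (m choose j) * w j)" using sum_pow_card[OF finE] unfolding m_def .
      also have "\<dots> = (if ii \<le> r then int ((m - ii - 1) choose (r - ii)) else 0)"
        unfolding w_def by (rule conv_wp0) (use mr in simp)
      also have "\<dots> = binom (int (card E) - i - 1) (int (card V) - int (nc E) - i)"
      proof (cases "ii \<le> r")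
        case True
        have e1: "int (card E) - i - 1 = int (m - ii - 1)" using True mr i_eq unfolding m_def by simp
        have e2: "int (card V) - int (nc E) - i = int (r - ii)" using True r_int i_eq by simp
        show ?thesis unfolding e1 e2 binom_nat using True by simp
      next
        case False
        then have "int (card V) - int (nc E) - i < 0" using r_int i_eq by simp
        then show ?thesis using False unfolding binom_def by simp
      qed
      finally show ?thesis .
    qed
    have t2: "(\<Sum>A\<in>{A\<in>Pow E. C \<subseteq> A}. w (card A)) = binom (int (card E) - int (card C) - i - 1) (int (card E) - int (card V) + int (nc E) - 1)"
      if C: "C \<in> ?Cy" for C
    proof -
      define c where "c = card C"
      have cm: "c \<le> m" using cyc_le[OF C] unfolding c_def .
      have "(\<Sum>A\<in>{A\<in>Pow E. C \<subseteq> A}. w (card A)) = (\<Sum>l\<le>m - c. int ((m - c) choose l) * w (c + l))"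
        using sum_supersets[OF finE cyc_sub[OF C]] unfolding m_def c_def .
      also have "\<dots> = (if ii + c \<le> r then int ((m - c - ii - 1) choose (r - c - ii)) else 0)"
        unfolding w_def by (rule conv_wp) (use mr cm in simp)
      also have "\<dots> = binom (int (card E) - int c - i - 1) (int (card E) - int (card V) + int (nc E) - 1)"
      proof (cases "ii + c \<le> r")
        case True
        have e1: "int (card E) - int c - i - 1 = int (m - c - ii - 1)" using True mr i_eq unfolding m_def by simp
        have e2: "int (card E) - int (card V) + int (nc E) - 1 = int (m - r - 1)" using mr r_int unfolding m_def by simp
        have sym: "(m - c - ii - 1) choose (r - c - ii) = (m - c - ii - 1) choose (m - r - 1)"
        proof -
          have "r - c - ii \<le> m - c - ii - 1" using True mr by simp
          then have "(m - c - ii - 1) choose (r - c - ii) = (m - c - ii - 1) choose ((m - c - ii - 1) - (r - c - ii))"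
            by (rule binomial_symmetric)
          moreover have "(m - c - ii - 1) - (r - c - ii) = m - r - 1" using True mr by simp
          ultimately show ?thesis by simp
        qed
        show ?thesis unfolding e1 e2 binom_nat using True sym by simp
      next
        case False
        show ?thesis
        proof (cases "int (card E) - int c - i - 1 \<ge> 0")
          case True
          have e1: "int (card E) - int c - i - 1 = int (m - c - ii - 1)" using True i_eq unfolding m_def by simp
          have e2: "int (card E) - int (card V) + int (nc E) - 1 = int (m - r - 1)" using mr r_int unfolding m_def by simp
          have "m - c - ii - 1 < m - r - 1" using False True i_eq mr unfolding m_def by simp
          then show ?thesis unfolding e1 e2 binom_nat using False by simp
        next
          case False
          then show ?thesis using \<open>\<not> ii + c \<le> r\<close> unfolding binom_def by simp
        qed
      qed
      finally show ?thesis unfolding c_def .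
    qed
    have "(\<Sum>C\<in>?Cy. \<Sum>A\<in>{A\<in>Pow E. C \<subseteq> A}. w (card A)) = (\<Sum>C\<in>?Cy. binom (int (card E) - int (card C) - i - 1) (int (card E) - int (card V) + int (nc E) - 1))"
      using t2 by (rule sum.cong[OF refl])
    then show ?thesis using lhs t1 unfolding h_def by simp
  next
    case False
    have i_eq: "i = -1" using False hi hr r_int unfolding h_def by linarith
    have hr1: "h = r + 2" using hi hr r_int i_eq unfolding h_def by linarith
    define w :: "nat \<Rightarrow> int" where "w j = (if j = r + 1 then 1 else 0)" for j
    have wz: "w j = 0" if "j \<ge> hG V E inc" for j using that hr1 unfolding w_def h_def by simp
    have forest0: "(\<Sum>A\<in>Pow E. if nul A = 0 then w (card A) else 0) = 0"
    proof (rule sum.neutral, rule ballI)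
      fix A assume "A \<in> Pow E"
      then have AE: "A \<subseteq> E" by simp
      show "(if nul A = 0 then w (card A) else 0) = 0"
      proof (cases "nul A = 0")
        case True
        have "nc E \<le> nc A" using nc_mono_le[OF AE] by simp
        then have "card A \<le> r" using True r_int unfolding nul_def by linarith
        then show ?thesis unfolding w_def by simp
      qed simp
    qed
    have lhs: "0 = (\<Sum>A\<in>Pow E. w (card A)) - (\<Sum>C\<in>?Cy. \<Sum>A\<in>{A\<in>Pow E. C \<subseteq> A}. w (card A))"
      using main_sum[of w, OF wz] forest0 unfolding h_def by simp
    have t1: "(\<Sum>A\<in>Pow E. w (card A)) = binom (int (card E) - i - 1) (int (card V) - int (nc E) - i)"
    proof -
      have "(\<Sum>A\<in>Pow E. w (card A)) = (\<Sum>j\<le>m. int (m choose j) * w j)" using sum_pow_card[OF finE] unfolding m_def .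
      also have "\<dots> = int (m choose (r + 1 - 0))"
        using conv_neg[where M=m and c=0 and r=r] mr unfolding w_def by simp
      also have "\<dots> = binom (int (card E) - i - 1) (int (card V) - int (nc E) - i)"
      proof -
        have e1: "int (card E) - i - 1 = int m" using i_eq unfolding m_def by simp
        have e2: "int (card V) - int (nc E) - i = int (r + 1)" using r_int i_eq by simp
        show ?thesis unfolding e1 e2 binom_nat by simp
      qed
      finally show ?thesis .
    qed
    have t2: "(\<Sum>A\<in>{A\<in>Pow E. C \<subseteq> A}. w (card A)) = binom (int (card E) - int (card C) - i - 1) (int (card E) - int (card V) + int (nc E) - 1)"
      if C: "C \<in> ?Cy" for C
    proof -
      define c where "c = card C"
      have cm: "c \<le> m" using cyc_le[OF C] unfolding c_def .
      have cr: "c \<le> r + 1" using cyc_lt[OF C] hr1 unfolding c_def by simp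
      have "(\<Sum>A\<in>{A\<in>Pow E. C \<subseteq> A}. w (card A)) = (\<Sum>l\<le>m - c. int ((m - c) choose l) * w (c + l))"
        using sum_supersets[OF finE cyc_sub[OF C]] unfolding m_def c_def .
      also have "\<dots> = int ((m - c) choose (r + 1 - c))"
        using conv_neg[where M="m - c" and c=c and r=r] mr cm cr unfolding w_def by simp
      also have "\<dots> = int ((m - c) choose (m - r - 1))"
      proof -
        have "r + 1 - c \<le> m - c" using mr by simp
        then have "(m - c) choose (r + 1 - c) = (m - c) choose ((m - c) - (r + 1 - c))" by (rule binomial_symmetric)
        moreover have "(m - c) - (r + 1 - c) = m - r - 1" using cr mr by simp
        ultimately show ?thesis by simp
      qed
      also have "\<dots> = binom (int (card E) - int c - i - 1) (int (card E) - int (card V) + int (nc E) - 1)"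
      proof -
        have e1: "int (card E) - int c - i - 1 = int (m - c)" using i_eq cm unfolding m_def by simp
        have e2: "int (card E) - int (card V) + int (nc E) - 1 = int (m - r - 1)" using mr r_int unfolding m_def by simp
        show ?thesis unfolding e1 e2 binom_nat ..
      qed
      finally show ?thesis unfolding c_def .
    qed
    have "(\<Sum>C\<in>?Cy. \<Sum>A\<in>{A\<in>Pow E. C \<subseteq> A}. w (card A)) = (\<Sum>C\<in>?Cy. binom (int (card E) - int (card C) - i - 1) (int (card E) - int (card V) + int (nc E) - 1))"
      using t2 by (rule sum.cong[OF refl])
    moreover have "xcoeff (tutte_x1 V E inc) i = 0" unfolding xcoeff_def using i_eq by simp
    ultimately show ?thesis using lhs t1 unfolding h_def by simp
  qed
qed

end

theorem corollary3p7:
  fixes V :: "'v set" and E :: "'e set" and inc :: "'e \<Rightarrow> 'v set" and i :: int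
  assumes "wf_graph V E inc"
    and "h_defined V E inc"
    and "i > int (card V) - int (ncomp V inc E) - int (hG V E inc)"
  shows "xcoeff (tutte_x1 V E inc) i =
    binom (int (card E) - i - 1) (int (card V) - int (ncomp V inc E) - i)
    - (\<Sum>C\<in>{C\<in>cycles V E inc. card C < hG V E inc}.
         binom (int (card E) - int (card C) - i - 1)
               (int (card E) - int (card V) + int (ncomp V inc E) - 1))"
proof -
  interpret G V E inc using assms(1) by (rule G.intro)
  show ?thesis using final[OF assms(2,3)] .
qed

end
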